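(* Let $\gamma=[0;1,1,c_3,1,c_5,1,c_7,1,\dots]$, i.e. $\gamma$ has infinite continued fraction expansion $[c_0;c_1,c_2,\dots]$ with $c_0=0$, $c_n=1$ for $n$ even $\ge2$ and for $n=1$, and $c_{2n+1}\in\{1,2\}$ for all $n\in\mathbb{N}$. Let $p_n/q_n$ denote its convergents. For every $m\in\mathbb{N}$: (i) if $\lfloor m\gamma\rfloor/m$ is not a convergent of $\gamma$, then $\frac{2}{\pi}m\tan\left(\frac{\pi}{2}(m\gamma-\lfloor m\gamma\rfloor)\right)>1$; (ii) if $\lfloor m\gamma\rfloor=p_{2n}$ and $m=q_{2n}$ for some $n$, and $c_{2n+1}=1$, then $\frac{2}{\pi}m\tan\left(\frac{\pi}{2}(m\gamma-\lfloor m\gamma\rfloor)\right)>\frac{2}{5}$; (iii) if $\lfloor m\gamma\rfloor=p_{2n}$ and $m=q_{2n}$ for some $n$, and $c_{2n+1}=2$, then $\frac{2}{\pi}m\tan\left(\frac{\pi}{2}(m\gamma-\lfloor m\gamma\rfloor)\right)<\frac{4}{\pi}(2-\sqrt{3})$.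
   Context: $[c_0;c_1,c_2,\dots]$ denotes the continued fraction $c_0+\cfrac{1}{c_1+\cfrac{1}{c_2+\cdots}}$. The $n$-th convergent of $\gamma$ is $p_n/q_n=[c_0;c_1,\dots,c_n]$ written in lowest terms with $q_n>0$. $\mathbb{N}=\{1,2,\dots\}$. *)

theory Defs
  imports Complex_Main
begin

fun cf :: "(nat \<Rightarrow> nat) \<Rightarrow> nat \<Rightarrow> rat" where
  "cf c 0 = of_nat (c 0)"
| "cf c (Suc n) = of_nat (c 0) + 1 / cf (\<lambda>k. c (Suc k)) n"

definition conv_p :: "(nat \<Rightarrow> nat) \<Rightarrow> nat \<Rightarrow> int" where
  "conv_p c n = fst (quotient_of (cf c n))"
definition conv_q :: "(nat \<Rightarrow> nat) \<Rightarrow> nat \<Rightarrow> int" where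
  "conv_q c n = snd (quotient_of (cf c n))"

end

theory Submission
  imports Defs "HOL-Analysis.Analysis"
begin

fun cfr :: "(nat \<Rightarrow> nat) \<Rightarrow> nat \<Rightarrow> real" where
  "cfr d 0 = real (d 0)"
| "cfr d (Suc n) = real (d 0) + 1 / cfr (\<lambda>k. d (Suc k)) n"

fun cfx :: "(nat \<Rightarrow> nat) \<Rightarrow> nat \<Rightarrow> real \<Rightarrow> real" where
  "cfx d 0 x = x"
| "cfx d (Suc n) x = real (d 0) + 1 / cfx (\<lambda>k. d (Suc k)) n x"

fun PP :: "(nat \<Rightarrow> nat) \<Rightarrow> nat \<Rightarrow> int" where
  "PP c 0 = 0" | "PP c (Suc 0) = 1"
| "PP c (Suc (Suc n)) = int (c n) * PP c (Suc n) + PP c n"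

fun QQ :: "(nat \<Rightarrow> nat) \<Rightarrow> nat \<Rightarrow> int" where
  "QQ c 0 = 1" | "QQ c (Suc 0) = 0"
| "QQ c (Suc (Suc n)) = int (c n) * QQ c (Suc n) + QQ c n"

lemma cf_cfr: "real_of_rat (cf c n) = cfr c n"
  by (induction n arbitrary: c) (auto simp: of_rat_add of_rat_divide)

lemma cfr_cfx: "cfr c (j + n) = cfx c j (cfr (\<lambda>k. c (j+k)) n)"
  by (induction j arbitrary: c) auto

lemma cfr_cfx0: "cfr c n = cfx c n (real (c n))"
  by (induction n arbitrary: c) auto

lemma cfx_back: "cfx c (Suc n) x = cfx c n (real (c n) + 1/x)"
  by (induction n arbitrary: c) auto

lemma moeb_aux:
  fixes x y A B C D :: real
  assumes "x \<noteq> 0" "y = cc + 1/x"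
  shows "(y*A + B)/(y*C + D) = (x*(cc*A+B) + A)/(x*(cc*C+D)+C)"
proof -
  have "(y*A + B)/(y*C + D) = (x*(y*A + B))/(x*(y*C + D))"
    using assms(1) by simp
  also have "x*(y*A + B) = x*(cc*A+B) + A" using assms by (simp add: field_simps)
  also have "x*(y*C + D) = x*(cc*C+D) + C" using assms by (simp add: field_simps)
  finally show ?thesis .
qed

lemma cfx_moeb: "x > 0 \<Longrightarrow> cfx c n x =
   (x * PP c (n+1) + PP c n) / (x * QQ c (n+1) + QQ c n)"
proof (induction n arbitrary: x)
  case 0 then show ?case by simp
next
  case (Suc n)
  have y: "real (c n) + 1/x > 0" using Suc.prems by (simp add: add_nonneg_pos)
  have "cfx c (Suc n) x = cfx c n (real (c n) + 1/x)" by (rule cfx_back)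
  also have "\<dots> = ((real (c n) + 1/x) * PP c (n+1) + PP c n) / ((real (c n) + 1/x) * QQ c (n+1) + QQ c n)"
    using Suc.IH[OF y] .
  also have "\<dots> = (x*(real (c n) * PP c (n+1) + PP c n) + PP c (n+1)) / (x*(real (c n) * QQ c (n+1) + QQ c n) + QQ c (n+1))"
    by (rule moeb_aux) (use Suc.prems in auto)
  finally show ?case by simp
qed

lemma det: "PP c (n+1) * QQ c n - PP c n * QQ c (n+1) = (-1)^n"
proof (induction n)
  case 0 then show ?case by simp
next
  case (Suc n)
  then show ?case by (simp add: algebra_simps)
qed

lemma QQ_nonneg: "QQ c n \<ge> 0"
  by (induction c n rule: QQ.induct) auto

lemma QQ_pos: assumes H: "\<forall>k\<ge>1. c k \<ge> 1" shows "QQ c (n+2) \<ge> 1"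
proof (induction n)
  case 0 then show ?case by (simp add: numeral_eq_Suc)
next
  case (Suc n)
  have "c (Suc n) \<ge> 1" using H by auto
  then have "int (c (Suc n)) * QQ c (n+2) \<ge> 1 * 1"
    using Suc by (intro mult_mono) auto
  moreover have "QQ c (Suc n) \<ge> 0" by (rule QQ_nonneg)
  ultimately show ?case by (simp add: numeral_eq_Suc)
qed

lemma QQ_mono: assumes H: "\<forall>k\<ge>1. c k \<ge> 1" shows "QQ c (n+1) \<le> QQ c (n+2)"
proof (cases n)
  case 0 then show ?thesis by (simp add: numeral_eq_Suc)
next
  case (Suc n')
  have "c (Suc n') \<ge> 1" using H by auto
  have q: "QQ c (n'+2) \<ge> 0" "QQ c (Suc n') \<ge> 0" by (rule QQ_nonneg)+
  have "int (c (Suc n')) * QQ c (n'+2) \<ge> 1 * QQ c (n'+2)"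
    using \<open>c (Suc n') \<ge> 1\<close> q by (intro mult_right_mono) auto
  then show ?thesis using Suc q by (simp add: numeral_eq_Suc)
qed

lemma QQ_ge: assumes H: "\<forall>k\<ge>1. c k \<ge> 1" shows "QQ c (n+2) \<ge> int n"
proof (induction n)
  case 0 then show ?case using QQ_nonneg by simp
next
  case (Suc n)
  have "QQ c (n+2) \<le> QQ c (n+3)" using QQ_mono[OF H, of "n+1"] by (simp add: numeral_eq_Suc)
  moreover have "QQ c (n+3) = int (c (Suc n)) * QQ c (n+2) + QQ c (n+1)" by (simp add: numeral_eq_Suc)
  moreover have "QQ c (n+1) \<ge> 1 \<or> n = 0"
    using QQ_pos[OF H, of "n-1"] by (cases n) auto
  moreover have "QQ c 3 \<ge> 1" using H by (simp add: numeral_eq_Suc)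
  moreover have "int (c (Suc n)) * QQ c (n+2) \<ge> 1 * QQ c (n+2)"
    using H QQ_nonneg[of c "n+2"] by (intro mult_right_mono) auto
  ultimately show ?case using Suc by (auto simp: numeral_eq_Suc)
qed

lemma cfr_conv: assumes H: "\<forall>k\<ge>1. c k \<ge> 1"
  shows "cfr c n = real_of_int (PP c (n+2)) / real_of_int (QQ c (n+2))"
proof (cases n)
  case 0 then show ?thesis by (simp add: numeral_eq_Suc)
next
  case (Suc n')
  have "c n \<ge> 1" using H Suc by auto
  then have "cfr c n = (real (c n) * PP c (n+1) + PP c n) / (real (c n) * QQ c (n+1) + QQ c n)"
    using cfr_cfx0[of c n] cfx_moeb[of "real (c n)" c n] by simp
  then show ?thesis by (simp add: numeral_eq_Suc)
qed

lemma conv_pq: assumes H: "\<forall>k\<ge>1. c k \<ge> 1"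
  shows "conv_p c n = PP c (n+2) \<and> conv_q c n = QQ c (n+2)"
proof -
  have e0: "real_of_rat (of_int A / of_int B) = of_int A / of_int B" for A B :: int
    by (simp add: of_rat_divide)
  have "real_of_rat (cf c n) = real_of_rat (of_int (PP c (n+2)) / of_int (QQ c (n+2)))"
    using cf_cfr cfr_conv[OF H] e0 by metis
  then have e: "cf c n = Fract (PP c (n+2)) (QQ c (n+2))"
    by (simp add: Fract_of_int_quotient)
  have d: "PP c (n+3) * QQ c (n+2) - PP c (n+2) * QQ c (n+3) = (-1)^(n+2)"
    using det[of c "n+2"] by (simp add: numeral_eq_Suc)
  have cop: "coprime (PP c (n+2)) (QQ c (n+2))"
  proof (rule coprimeI)
    fix x assume "x dvd PP c (n+2)" "x dvd QQ c (n+2)"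
    then have "x dvd PP c (n+3) * QQ c (n+2) - PP c (n+2) * QQ c (n+3)" by simp
    then have "x dvd (-1)^(n+2)" using d by simp
    moreover have "is_unit ((-1::int)^(n+2))" by simp
    ultimately show "is_unit x" using dvd_unit_imp_unit by blast
  qed
  have "QQ c (n+2) > 0" using QQ_pos[OF H, of n] by simp
  then show ?thesis using e cop by (simp add: conv_p_def conv_q_def quotient_of_Fract)
qed

lemma T1: "\<forall>k. 1 \<le> d k \<and> d k \<le> 2 \<Longrightarrow> 1 \<le> cfr d n \<and> cfr d n \<le> 3"
proof (induction n arbitrary: d)
  case 0
  have "1 \<le> d 0" "d 0 \<le> 2" using 0 by auto
  then show ?case by simp
next
  case (Suc n)
  have "1 \<le> cfr (\<lambda>k. d (Suc k)) n" using Suc by auto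
  then have a: "0 < 1 / cfr (\<lambda>k. d (Suc k)) n" "1 / cfr (\<lambda>k. d (Suc k)) n \<le> 1" by auto
  have "1 \<le> d 0" "d 0 \<le> 2" using Suc.prems by auto
  then have b: "1 \<le> real (d 0)" "real (d 0) \<le> 2" by simp_all
  have "cfr d (Suc n) = real (d 0) + 1 / cfr (\<lambda>k. d (Suc k)) n" by simp
  then show ?case using a b by linarith
qed

lemma T2: assumes "\<forall>k. 1 \<le> d k \<and> d k \<le> 2" "d 1 = 1" "n \<ge> 2"
  shows "real (d 0) + 1/2 \<le> cfr d n \<and> cfr d n \<le> real (d 0) + 3/4"
proof -
  obtain n' where n: "n = Suc (Suc n')" using assms(3) by (metis add_2_eq_Suc le_Suc_ex)
  define t where "t = cfr (\<lambda>k. d (Suc (Suc k))) n'"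
  have t: "1 \<le> t" "t \<le> 3" using T1[of "\<lambda>k. d (Suc (Suc k))" n'] assms(1) unfolding t_def by auto
  have "cfr d n = real (d 0) + 1 / (1 + 1/t)" using assms(2) unfolding n t_def by simp
  moreover have "1 / (1 + 1/t) = t/(t+1)" using t by (simp add: field_simps)
  moreover have "t/(t+1) \<ge> 1/2" "t/(t+1) \<le> 3/4" using t by (simp_all add: field_simps)
  ultimately show ?thesis by simp
qed

lemma T3: assumes "\<forall>k. 1 \<le> d k \<and> d k \<le> 2" "d 0 = 1" "d 2 = 1" "n \<ge> 3"
  shows "15/11 \<le> cfr d n \<and> cfr d n \<le> 5/3"
proof -
  obtain n' where n: "n = Suc n'" "n' \<ge> 2" using assms(4) by (cases n) auto
  define y where "y = cfr (\<lambda>k. d (Suc k)) n'"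
  have "real (d 1) + 1/2 \<le> y \<and> y \<le> real (d 1) + 3/4"
    using T2[of "\<lambda>k. d (Suc k)" n'] assms n unfolding y_def by (simp add: numeral_eq_Suc)
  moreover have "1 \<le> real (d 1)" "real (d 1) \<le> 2" using assms(1) by auto
  ultimately have y: "3/2 \<le> y" "y \<le> 11/4" by auto
  have "cfr d n = 1 + 1/y" using assms(2) unfolding n y_def by simp
  moreover have "1/y \<ge> 4/11" "1/y \<le> 2/3" using y by (simp_all add: field_simps)
  ultimately show ?thesis by simp
qed

lemma rep:
  assumes H: "\<forall>k\<ge>1. 1 \<le> c k \<and> c k \<le> 2" and HE: "\<forall>k\<ge>1. c (2*k) = 1"
    and g: "(\<lambda>n. cfr c n) \<longlonglongrightarrow> \<gamma>" and K: "K \<ge> 1"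
  shows "\<exists>\<alpha>::real. \<gamma> = (\<alpha> * PP c (K+1) + PP c K) / (\<alpha> * QQ c (K+1) + QQ c K)
            \<and> 1 \<le> \<alpha> \<and> \<alpha> \<le> 3 \<and> (even K \<longrightarrow> 15/11 \<le> \<alpha> \<and> \<alpha> \<le> 5/3)"
proof -
  define d where "d = (\<lambda>k. c (K + k))"
  define t where "t = (\<lambda>n. cfr d n)"
  have dH: "\<forall>k. 1 \<le> d k \<and> d k \<le> 2" using H K unfolding d_def by auto
  have tb: "1 \<le> t n \<and> t n \<le> 3" for n using T1[OF dH] unfolding t_def by auto
  have "bounded (range t)"
    unfolding bounded_iff
  proof (intro exI[of _ 3] ballI)
    fix x assume "x \<in> range t"
    then obtain n where "x = t n" by auto
    then show "norm x \<le> 3" using tb[of n] by auto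
  qed
  then obtain \<alpha> r where r: "strict_mono r" and lim: "(t \<circ> r) \<longlonglongrightarrow> \<alpha>"
    using bounded_imp_convergent_subsequence by blast
  have a1: "1 \<le> \<alpha>" by (rule LIMSEQ_le_const[OF lim]) (use tb in auto)
  have a3: "\<alpha> \<le> 3" by (rule LIMSEQ_le_const2[OF lim]) (use tb in auto)
  have aE: "15/11 \<le> \<alpha> \<and> \<alpha> \<le> 5/3" if ev: "even K"
  proof -
    have tE: "15/11 \<le> t n \<and> t n \<le> 5/3" if "n \<ge> 3" for n
      unfolding t_def
    proof (rule T3[OF dH _ _ that])
      show "d 0 = 1" using HE K ev unfolding d_def by (auto elim!: evenE)
      show "d 2 = 1" using HE K ev unfolding d_def
        by (auto elim!: evenE simp: mult_2_right[symmetric] distrib_left[symmetric])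
    qed
    have "\<forall>n\<ge>3. 15/11 \<le> (t \<circ> r) n \<and> (t \<circ> r) n \<le> 5/3"
      using tE seq_suble[OF r] by (metis comp_apply order.trans)
    then show ?thesis
      using LIMSEQ_le_const[OF lim, of "15/11"] LIMSEQ_le_const2[OF lim, of "5/3"] by blast
  qed
  define M where "M = (\<lambda>x::real. (x * PP c (K+1) + PP c K) / (x * QQ c (K+1) + QQ c K))"
  have QK1: "QQ c (K+1) \<ge> 1" using QQ_pos[of c "K-1"] H K by auto
  have QK0: "QQ c K \<ge> 0" by (rule QQ_nonneg)
  have den: "\<alpha> * QQ c (K+1) + QQ c K \<noteq> 0"
  proof -
    have "\<alpha> * QQ c (K+1) \<ge> 1 * 1" using a1 QK1 by (intro mult_mono) auto
    then show ?thesis using QK0 by linarith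
  qed
  have l1: "(\<lambda>n. M (t (r n))) \<longlonglongrightarrow> M \<alpha>"
    unfolding M_def using lim den unfolding comp_def by (auto intro!: tendsto_intros)
  have eq: "M (t (r n)) = cfr c (r n + K)" for n
  proof -
    have "cfr c (K + r n) = cfx c K (t (r n))" unfolding t_def d_def by (rule cfr_cfx)
    also have "\<dots> = M (t (r n))" unfolding M_def by (rule cfx_moeb) (use tb[of "r n"] in auto)
    finally show ?thesis by (simp add: add.commute)
  qed
  have "(\<lambda>n. cfr c (n + K)) \<longlonglongrightarrow> \<gamma>" using LIMSEQ_ignore_initial_segment[OF g] .
  then have "(\<lambda>n. cfr c (r n + K)) \<longlonglongrightarrow> \<gamma>"
    using LIMSEQ_subseq_LIMSEQ[OF _ r] unfolding comp_def by blast
  then have "(\<lambda>n. M (t (r n))) \<longlonglongrightarrow> \<gamma>" using eq by simp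
  then have "\<gamma> = M \<alpha>" using l1 LIMSEQ_unique by blast
  then show ?thesis using a1 a3 aE unfolding M_def by blast
qed

lemma tan_ge: fixes x :: real assumes "0 \<le> x" "x < pi/2" shows "x \<le> tan x"
proof (cases "x = 0")
  case True then show ?thesis by simp
next
  case False
  then have x0: "0 < x" using assms by simp
  have "DERIV tan z :> inverse ((cos z)\<^sup>2)" if "0 \<le> z" "z \<le> x" for z
  proof -
    have "cos z > 0" using that assms by (intro cos_gt_zero_pi) auto
    then show "DERIV tan z :> inverse ((cos z)\<^sup>2)" by (intro DERIV_tan) simp
  qed
  from MVT2[of 0 x tan, OF x0 this] obtain z where z: "0 < z" "z < x" "tan x - tan 0 = (x - 0) * inverse ((cos z)\<^sup>2)"
    by blast
  have cz: "cos z > 0" using z assms by (intro cos_gt_zero_pi) auto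
  have "(cos z)\<^sup>2 \<le> 1" by (simp add: abs_square_le_1)
  then have "inverse ((cos z)\<^sup>2) \<ge> 1" using cz by (simp add: one_le_inverse)
  then have "x * inverse ((cos z)\<^sup>2) \<ge> x * 1" using x0 by (intro mult_left_mono) auto
  then show ?thesis using z by simp
qed

lemma cos_lb: fixes x :: real shows "1 - x\<^sup>2/2 \<le> cos x"
proof -
  have "cos x = 1 - 2 * sin (x/2) ^ 2" using cos_double_sin[of "x/2"] by simp
  moreover have "sin (x/2) ^ 2 \<le> (x/2)^2"
    using abs_sin_x_le_abs_x[of "x/2"] by (metis abs_le_square_iff)
  ultimately show ?thesis by (simp add: power_divide)
qed

lemma tan_le: fixes x :: real assumes "0 \<le> x" "x \<le> 1" shows "tan x \<le> x / (1 - x\<^sup>2/2)"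
proof -
  have x2: "x\<^sup>2 \<le> 1" using assms by (simp add: power_le_one)
  then have pos: "0 < 1 - x\<^sup>2/2" by simp
  have cpos: "0 < cos x" using pos cos_lb[of x] by linarith
  have "tan x = sin x / cos x" by (simp add: tan_def)
  also have "\<dots> \<le> x / cos x" using sin_x_le_x[OF assms(1)] cpos by (simp add: divide_right_mono)
  also have "\<dots> \<le> x / (1 - x\<^sup>2/2)" using cos_lb[of x] pos assms(1) by (intro divide_left_mono) auto
  finally show ?thesis .
qed

lemma existsK:
  assumes H1: "\<forall>k\<ge>1. c k \<ge> 1" and m: "m \<ge> 1"
  shows "\<exists>K\<ge>2. QQ c K \<le> int m \<and> int m < QQ c (K+1)"
proof -
  define N where "N = (LEAST n. n \<ge> 3 \<and> int m < QQ c n)"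
  have "QQ c (m+1+2) \<ge> int (m+1)" by (rule QQ_ge[OF H1])
  then have ex: "m + 1 + 2 \<ge> 3 \<and> int m < QQ c (m+1+2)" by linarith
  have N: "N \<ge> 3" "int m < QQ c N" using LeastI_ex[of "\<lambda>n. n \<ge> 3 \<and> int m < QQ c n"] ex
    unfolding N_def by blast+
  have "QQ c (N-1) \<le> int m"
  proof (cases "N - 1 \<ge> 3")
    case True
    have "N - 1 < N" using N by simp
    then have "\<not> (N - 1 \<ge> 3 \<and> int m < QQ c (N-1))" unfolding N_def by (rule not_less_Least)
    then show ?thesis using True by simp
  next
    case False
    then have "N - 1 = 2" using N by simp
    then show ?thesis using m by (simp add: numeral_eq_Suc)
  qed
  then show ?thesis using N by (intro exI[of _ "N-1"]) auto
qed

lemma part_i: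
  fixes m :: nat and \<gamma> :: real
  assumes H: "\<forall>k\<ge>1. 1 \<le> c k \<and> c k \<le> 2" and HE: "\<forall>k\<ge>1. c (2*k) = 1"
    and g: "(\<lambda>n. cfr c n) \<longlonglongrightarrow> \<gamma>" and m: "m \<ge> 1"
    and nc: "\<not> (\<exists>k. real_of_int \<lfloor>real m * \<gamma>\<rfloor> / real m = cfr c k)"
  shows "real m * (real m * \<gamma> - real_of_int \<lfloor>real m * \<gamma>\<rfloor>) > 1"
proof -
  have H1: "\<forall>k\<ge>1. c k \<ge> 1" using H by auto
  obtain K where K: "K \<ge> 2" "QQ c K \<le> int m" "int m < QQ c (K+1)" using existsK[OF H1 m] by blast
  obtain \<alpha> :: real where \<gamma>: "\<gamma> = (\<alpha> * PP c (K+1) + PP c K) / (\<alpha> * QQ c (K+1) + QQ c K)"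
    and a1: "1 \<le> \<alpha>" and aE: "even K \<longrightarrow> 15/11 \<le> \<alpha> \<and> \<alpha> \<le> 5/3"
    using rep[OF H HE g, of K] K by auto
  define p where "p = \<lfloor>real m * \<gamma>\<rfloor>"
  define P1 where "P1 = PP c (K+1)"
  define P0 where "P0 = PP c K"
  define Q1 where "Q1 = QQ c (K+1)"
  define Q0 where "Q0 = QQ c K"
  define D :: int where "D = (-1)^K"
  have det': "P1 * Q0 - P0 * Q1 = D" unfolding P1_def P0_def Q1_def Q0_def D_def by (rule det)
  have DD: "D * D = 1" unfolding D_def by (simp flip: power_mult_distrib)
  define a where "a = D * (p * Q0 - int m * P0)"
  define b where "b = D * (int m * P1 - p * Q1)"
  have hm: "int m = a * Q1 + b * Q0"
  proof -
    have "a * Q1 + b * Q0 = D * int m * (P1 * Q0 - P0 * Q1)" unfolding a_def b_def by (simp add: algebra_simps)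
    also have "\<dots> = int m" using det' DD by (simp add: algebra_simps)
    finally show ?thesis by simp
  qed
  have hp: "p = a * P1 + b * P0"
  proof -
    have "a * P1 + b * P0 = D * p * (P1 * Q0 - P0 * Q1)" unfolding a_def b_def by (simp add: algebra_simps)
    also have "\<dots> = p" using det' DD by (simp add: algebra_simps)
    finally show ?thesis by simp
  qed
  have "QQ c (K-2+2) \<ge> 1" by (rule QQ_pos[OF H1])
  moreover have "K-2+2 = K" using K by simp
  ultimately have Q0pos: "Q0 \<ge> 1" unfolding Q0_def by metis
  have Q01: "Q0 \<le> Q1" using QQ_mono[OF H1, of "K-1"] K unfolding Q0_def Q1_def by simp
  define E where "E = \<alpha> * Q1 + Q0"
  have Epos: "E > 0"
  proof -
    have "\<alpha> * Q1 \<ge> 1 * 1" using a1 Q0pos Q01 by (intro mult_mono) auto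
    then show ?thesis unfolding E_def using Q0pos by linarith
  qed
  have f_eq: "real m * \<gamma> - p = (real_of_int b * \<alpha> * real_of_int D - real_of_int a * real_of_int D) / E"
  proof -
    have rm: "real m = real_of_int a * Q1 + real_of_int b * Q0" using hm by (metis of_int_add of_int_mult of_int_of_nat_eq)
    have rp: "real_of_int p = real_of_int a * P1 + real_of_int b * P0" using hp by (metis of_int_add of_int_mult)
    have rD: "real_of_int D = real_of_int P1 * Q0 - real_of_int P0 * Q1" using det' by (metis of_int_diff of_int_mult)
    have "real m * \<gamma> - p = (real m * (\<alpha> * P1 + P0) - p * E) / E"
      using Epos unfolding \<gamma> E_def P1_def P0_def Q1_def Q0_def by (simp add: field_simps)
    also have "real m * (\<alpha> * P1 + P0) - p * E = real_of_int b * \<alpha> * real_of_int D - real_of_int a * real_of_int D"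
      unfolding rm rp rD E_def by (simp add: algebra_simps)
    finally show ?thesis .
  qed
  define f where "f = real m * \<gamma> - p"
  have f0: "f \<ge> 0" unfolding f_def p_def by linarith
  have cnv: "real_of_int p / real m \<noteq> cfr c k" for k using nc unfolding p_def by blast
  have a0: "a \<noteq> 0"
  proof
    assume "a = 0"
    then have "int m = b * Q0" "p = b * P0" using hm hp by auto
    then have "b \<noteq> 0" using m by auto
    have "real_of_int p / real m = real_of_int (b * P0) / real_of_int (b * Q0)"
      using \<open>int m = b * Q0\<close> \<open>p = b * P0\<close> by (metis of_int_of_nat_eq)
    also have "\<dots> = real_of_int P0 / real_of_int Q0" using \<open>b \<noteq> 0\<close> by simp
    also have "\<dots> = cfr c (K-2)"
    proof -
      have "K-2+2 = K" using K by simp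
      then show ?thesis using cfr_conv[OF H1, of "K-2"] unfolding P0_def Q0_def by metis
    qed
    finally show False using cnv by blast
  qed
  have sgn1: "a \<ge> 1 \<Longrightarrow> b \<le> -1"
  proof (rule ccontr)
    assume "a \<ge> 1" "\<not> b \<le> -1"
    then have "a * Q1 \<ge> 1 * Q1" using Q0pos Q01 by (intro mult_right_mono) auto
    moreover have "b * Q0 \<ge> 0" using \<open>\<not> b \<le> -1\<close> Q0pos by simp
    ultimately show False using hm K(3) unfolding Q1_def by linarith
  qed
  have sgn2: "a \<le> -1 \<Longrightarrow> b \<ge> 1"
  proof (rule ccontr)
    assume "a \<le> -1" "\<not> b \<ge> 1"
    then have "a * Q1 \<le> (-1) * Q1" using Q0pos Q01 by (intro mult_right_mono) auto
    moreover have "b * Q0 \<le> 0" using \<open>\<not> b \<ge> 1\<close> Q0pos by (simp add: mult_nonpos_nonneg)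
    ultimately show False using hm Q0pos Q01 by linarith
  qed
  show ?thesis
  proof (cases "even K")
    case True
    then have D1: "D = 1" unfolding D_def by simp
    have al: "\<alpha> > 1" using aE True by simp
    have fe: "f = (b * \<alpha> - a) / E" using f_eq D1 unfolding f_def by simp
    have "a \<le> -1"
    proof (rule ccontr)
      assume "\<not> a \<le> -1"
      then have "a \<ge> 1" using a0 by linarith
      then have "b \<le> -1" using sgn1 by blast
      then have "b * \<alpha> \<le> 0" using al by (simp add: mult_nonpos_nonneg)
      then have "b * \<alpha> - a < 0" using \<open>a \<ge> 1\<close> by linarith
      then have "f < 0" using fe Epos by (simp add: divide_neg_pos)
      then show False using f0 by simp
    qed
    then have "b \<ge> 1" using sgn2 by blast
    have bQ: "b * Q0 \<ge> int m + Q1" using hm \<open>a \<le> -1\<close>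
    proof -
      have "a * Q1 \<le> (-1) * Q1" using \<open>a \<le> -1\<close> Q0pos Q01 by (intro mult_right_mono) auto
      then show ?thesis using hm by linarith
    qed
    have "int m * (b * Q0) \<ge> Q0 * (Q0 + Q1)"
    proof -
      have "int m * (b * Q0) \<ge> int m * (int m + Q1)" using bQ by (intro mult_left_mono) auto
      moreover have "int m * (int m + Q1) \<ge> Q0 * (Q0 + Q1)" using K(2) Q0pos Q01 unfolding Q0_def
        by (intro mult_mono) auto
      ultimately show ?thesis by linarith
    qed
    then have "(int m * b) * Q0 \<ge> (Q0 + Q1) * Q0" by (simp add: algebra_simps)
    then have mb: "int m * b \<ge> Q0 + Q1" using Q0pos by (simp add: mult_le_cancel_right)
    then have mbr: "real m * b \<ge> real_of_int Q0 + Q1" by (metis of_int_le_iff of_int_add of_int_mult of_int_of_nat_eq)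
    have "real m * f = (real m * b * \<alpha> - real m * a) / E" using fe by (simp add: algebra_simps)
    also have "\<dots> \<ge> (real m * b * \<alpha>) / E" using Epos \<open>a \<le> -1\<close> by (intro divide_right_mono) (auto simp: mult_nonneg_nonpos)
    finally have "real m * f \<ge> real m * b * \<alpha> / E" .
    moreover have "real m * b * \<alpha> \<ge> (real_of_int Q0 + Q1) * \<alpha>" using mbr al by (intro mult_right_mono) auto
    moreover have "(real_of_int Q0 + Q1) * \<alpha> > E" unfolding E_def using al Q0pos by (simp add: algebra_simps)
    ultimately have "real m * b * \<alpha> / E > 1" using Epos by (simp add: less_divide_eq_1)
    then have "real m * f > 1" using \<open>real m * f \<ge> real m * b * \<alpha> / E\<close> by linarith
    then show ?thesis unfolding f_def p_def .
  next
    case False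
    then have D1: "D = -1" unfolding D_def by simp
    have fe: "f = (a - b * \<alpha>) / E" using f_eq D1 unfolding f_def by (simp add: algebra_simps)
    have "a \<ge> 1"
    proof (rule ccontr)
      assume "\<not> a \<ge> 1"
      then have "a \<le> -1" using a0 by linarith
      then have "b \<ge> 1" using sgn2 by blast
      then have "b * \<alpha> \<ge> 1 * 1" using a1 by (intro mult_mono) auto
      then have "a - b * \<alpha> < 0" using \<open>a \<le> -1\<close> by linarith
      then have "f < 0" using fe Epos by (simp add: divide_neg_pos)
      then show False using f0 by simp
    qed
    then have "b \<le> -1" using sgn1 by blast
    define v where "v = - b"
    have v1: "v \<ge> 1" using \<open>b \<le> -1\<close> unfolding v_def by simp
    have K3: "K \<ge> 3" using K False by presburger
    define Qm where "Qm = QQ c (K-1)"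
    define Pm where "Pm = PP c (K-1)"
    have "even (K-1)" using False K3 by simp
    then obtain j where j: "K - 1 = 2*j" by (rule evenE)
    then have "j \<ge> 1" using K3 by simp
    then have cK: "c (K-1) = 1" using HE j by simp
    have Q1e: "Q1 = Q0 + Qm"
    proof -
      have "K + 1 = Suc (Suc (K-1))" "K = Suc (K-1)" using K3 by auto
      then show ?thesis unfolding Q1_def Q0_def Qm_def using cK by (metis QQ.simps(3) mult_1 of_nat_1)
    qed
    have P1e: "P1 = P0 + Pm"
    proof -
      have "K + 1 = Suc (Suc (K-1))" "K = Suc (K-1)" using K3 by auto
      then show ?thesis unfolding P1_def P0_def Pm_def using cK by (metis PP.simps(3) mult_1 of_nat_1)
    qed
    have "QQ c (K-2+1) \<le> QQ c (K-2+2)" by (rule QQ_mono[OF H1])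
    moreover have "K-2+1 = K-1" "K-2+2 = K" using K3 by simp_all
    ultimately have Qm0: "Qm \<le> Q0" unfolding Qm_def Q0_def by metis
    have Qm00: "Qm \<ge> 0" unfolding Qm_def by (rule QQ_nonneg)
    have mv: "int m = a * Q1 - v * Q0" using hm unfolding v_def by simp
    have "(a - 1) * Q0 \<le> (a - 1) * Q1" using \<open>a \<ge> 1\<close> Q01 by (intro mult_left_mono) auto
    moreover have "(a - 1) * Q1 < v * Q0" using mv K(3) unfolding Q1_def by (simp add: algebra_simps)
    ultimately have "(a - 1) * Q0 < v * Q0" by linarith
    then have va: "a - 1 < v" using Q0pos by (simp add: mult_less_cancel_right)
    show ?thesis
    proof (cases "a = 1")
      case True
      then have "int m = Q0 + Qm - v * Q0" using mv Q1e by simp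
      then have "v * Q0 \<le> Qm" using K(2) unfolding Q0_def by linarith
      moreover have "1 * Q0 \<le> v * Q0" using v1 Q0pos by (intro mult_right_mono) auto
      ultimately have "Q0 \<le> Qm" by linarith
      then have "Qm = Q0" using Qm0 by simp
      have "v * Q0 \<le> 1 * Q0" using \<open>v * Q0 \<le> Qm\<close> \<open>Qm = Q0\<close> by simp
      then have "v = 1" using v1 Q0pos by (simp add: mult_le_cancel_right)
      then have mm: "int m = Qm" using \<open>int m = Q0 + Qm - v * Q0\<close> by simp
      have pp: "p = Pm" using hp True \<open>v = 1\<close> P1e unfolding v_def by simp
      have "real_of_int p / real m = real_of_int Pm / real_of_int Qm" using mm pp by (metis of_int_of_nat_eq)
      also have "\<dots> = cfr c (K-3)"
      proof -
        have "K-3+2 = K-1" using K3 by simp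
        then show ?thesis using cfr_conv[OF H1, of "K-3"] unfolding Pm_def Qm_def by metis
      qed
      finally show ?thesis using cnv by blast
    next
      case False
      then have a2: "a \<ge> 2" using \<open>a \<ge> 1\<close> by simp
      have vr: "real_of_int v \<ge> a" using va by simp
      have "real m * f = real m * (a + v * \<alpha>) / E" using fe unfolding v_def by (simp add: algebra_simps)
      moreover have "real m * (a + v * \<alpha>) \<ge> real_of_int Q0 * (2 * (1 + \<alpha>))"
      proof (rule mult_mono)
        show "real_of_int Q0 \<le> real m" using K(2) unfolding Q0_def by (metis of_int_le_iff of_int_of_nat_eq)
        have "v * \<alpha> \<ge> a * \<alpha>" using vr a1 by (intro mult_right_mono) auto
        moreover have "real_of_int a * (1 + \<alpha>) \<ge> 2 * (1 + \<alpha>)" using a2 a1 by (intro mult_right_mono) auto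
        ultimately show "2 * (1 + \<alpha>) \<le> real_of_int a + real_of_int v * \<alpha>" by (simp add: algebra_simps)
      qed (use a1 in auto)
      moreover have "real_of_int Q0 * (2 * (1 + \<alpha>)) > E"
      proof -
        have h: "\<alpha> * Qm \<le> \<alpha> * Q0" using Qm0 a1 by (intro mult_left_mono) auto
        have q: "real_of_int Q0 \<ge> 1" using Q0pos by simp
        have e1: "E = \<alpha> * Q0 + \<alpha> * Qm + Q0" unfolding E_def Q1e by (simp add: algebra_simps)
        have e2: "real_of_int Q0 * (2 * (1 + \<alpha>)) = 2 * Q0 + 2 * (\<alpha> * Q0)" by (simp add: algebra_simps)
        show ?thesis unfolding e2 e1 using h q by linarith
      qed
      ultimately have "real m * f > 1" using Epos by simp
      then show ?thesis unfolding f_def p_def .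
    qed
  qed
qed

lemma part_23:
  fixes m :: nat and \<gamma> :: real
  assumes H: "\<forall>k\<ge>1. 1 \<le> c k \<and> c k \<le> 2" and HE: "\<forall>k\<ge>1. c (2*k) = 1"
    and g: "(\<lambda>n. cfr c n) \<longlonglongrightarrow> \<gamma>" and c1: "c 1 = 1"
    and hp: "\<lfloor>real m * \<gamma>\<rfloor> = PP c (2*n+2)" and hm: "int m = QQ c (2*n+2)"
  shows "(c (2*n+1) = 1 \<longrightarrow> real m * (real m * \<gamma> - real_of_int \<lfloor>real m * \<gamma>\<rfloor>) > 2/5)
       \<and> (c (2*n+1) = 2 \<longrightarrow> real m * (real m * \<gamma> - real_of_int \<lfloor>real m * \<gamma>\<rfloor>) \<le> 10/31 \<and> m \<ge> 2)"
proof -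
  have H1: "\<forall>k\<ge>1. c k \<ge> 1" using H by auto
  define K where "K = Suc (2*n+1)"
  have K2: "2*n+2 = K" unfolding K_def by simp
  obtain \<alpha> :: real where \<gamma>: "\<gamma> = (\<alpha> * PP c (K+1) + PP c K) / (\<alpha> * QQ c (K+1) + QQ c K)"
    and aE: "15/11 \<le> \<alpha> \<and> \<alpha> \<le> 5/3"
    using rep[OF H HE g, of K] unfolding K_def by auto
  define P1 where "P1 = PP c (K+1)"
  define P0 where "P0 = PP c K"
  define Q1 where "Q1 = QQ c (K+1)"
  define Q0 where "Q0 = QQ c K"
  define Qm where "Qm = QQ c (2*n+1)"
  have det': "P1 * Q0 - P0 * Q1 = 1" using det[of c K] unfolding P1_def P0_def Q1_def Q0_def K_def by simp
  have Q1e: "Q1 = int (c (2*n+1)) * Q0 + Qm" unfolding Q1_def Q0_def Qm_def K_def by simp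
  have Q0pos: "Q0 \<ge> 1" using QQ_pos[OF H1, of "2*n"] unfolding Q0_def K_def by (simp add: numeral_eq_Suc)
  have Qm0: "Qm \<ge> 0" unfolding Qm_def by (rule QQ_nonneg)
  have mQ: "int m = Q0" unfolding Q0_def K2[symmetric] by (rule hm)
  have pP: "\<lfloor>real m * \<gamma>\<rfloor> = P0" unfolding P0_def K2[symmetric] by (rule hp)
  define E where "E = \<alpha> * Q1 + Q0"
  have Epos: "E > 0"
  proof -
    have "Q1 \<ge> 0" unfolding Q1_def by (rule QQ_nonneg)
    then have "\<alpha> * Q1 \<ge> 0" using aE by simp
    then show ?thesis unfolding E_def using Q0pos by linarith
  qed
  have rm: "real m = real_of_int Q0" using mQ by (metis of_int_of_nat_eq)
  have mf: "real m * (real m * \<gamma> - real_of_int \<lfloor>real m * \<gamma>\<rfloor>) = \<alpha> * Q0 / E"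
  proof -
    have rD: "real_of_int P1 * Q0 - real_of_int P0 * Q1 = 1" using det' by (metis of_int_diff of_int_mult of_int_1)
    have "real m * \<gamma> - real_of_int \<lfloor>real m * \<gamma>\<rfloor> = Q0 * \<gamma> - P0"
      by (subst pP) (simp add: rm)
    also have "\<dots> = (Q0 * (\<alpha> * P1 + P0) - P0 * E) / E"
      using Epos unfolding \<gamma> E_def P1_def P0_def Q1_def Q0_def by (simp add: field_simps)
    also have "Q0 * (\<alpha> * P1 + P0) - P0 * E = \<alpha> * (real_of_int P1 * Q0 - real_of_int P0 * Q1)"
      unfolding E_def by (simp add: algebra_simps)
    also have "\<dots> = \<alpha>" using rD by simp
    finally show ?thesis unfolding rm by simp
  qed
  have ii: "real m * (real m * \<gamma> - real_of_int \<lfloor>real m * \<gamma>\<rfloor>) > 2/5" if cc1: "c (2*n+1) = 1"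
  proof -
    have q43: "4 * Qm \<le> 3 * Q0"
    proof (cases n)
      case 0 then show ?thesis using Q0pos unfolding Qm_def by simp
    next
      case (Suc n')
      define Q2 where "Q2 = QQ c (2*n)"
      have "n \<ge> 1" using Suc by simp
      then have c2: "c (2*n) = 1" using HE by blast
      have "Q0 = Qm + Q2" unfolding Q0_def Qm_def Q2_def K_def using c2 by simp
      moreover have "Qm \<le> 3 * Q2"
      proof -
        have e: "Qm = int (c (2*n'+1)) * Q2 + QQ c (2*n'+1)"
          unfolding Qm_def Q2_def Suc by (simp add: numeral_eq_Suc)
        have "QQ c (2*n'+1) \<le> QQ c (2*n'+2)" by (rule QQ_mono[OF H1])
        then have "QQ c (2*n'+1) \<le> Q2" unfolding Q2_def Suc by (simp add: numeral_eq_Suc)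
        moreover have "int (c (2*n'+1)) * Q2 \<le> 2 * Q2" using H Q2_def
          by (intro mult_right_mono) (auto simp: QQ_nonneg)
        ultimately show ?thesis using e by linarith
      qed
      ultimately show ?thesis by linarith
    qed
    have "\<alpha> * Qm \<le> \<alpha> * (3/4 * Q0)" using q43 aE by (intro mult_left_mono) auto
    moreover have "E = \<alpha> * Q0 + \<alpha> * Qm + Q0" unfolding E_def Q1e cc1 by (simp add: algebra_simps)
    moreover have "real_of_int Q0 \<ge> 1" using Q0pos by simp
    moreover have "\<alpha> * Q0 \<ge> 15/11 * Q0" using aE Q0pos by (intro mult_right_mono) auto
    ultimately have "5 * (\<alpha> * Q0) > 2 * E" by linarith
    then show ?thesis unfolding mf using Epos by (simp add: field_simps)
  qed
  have iii: "real m * (real m * \<gamma> - real_of_int \<lfloor>real m * \<gamma>\<rfloor>) \<le> 10/31 \<and> m \<ge> 2" if c2: "c (2*n+1) = 2"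
  proof -
    obtain n' where Suc: "n = Suc n'" using c2 c1 by (cases n) auto
    define Q2 where "Q2 = QQ c (2*n)"
    have "n \<ge> 1" using Suc by simp
    then have cc2: "c (2*n) = 1" using HE by blast
    have "Q0 = Qm + Q2" unfolding Q0_def Qm_def Q2_def K_def using cc2 by simp
    moreover have "Q2 \<le> Qm"
    proof -
      have "QQ c (2*n'+1+1) \<le> QQ c (2*n'+1+2)" by (rule QQ_mono[OF H1])
      moreover have "2*n'+1+1 = 2*n" "2*n'+1+2 = 2*n+1" using Suc by simp_all
      ultimately show ?thesis unfolding Q2_def Qm_def by metis
    qed
    ultimately have q2: "Q0 \<le> 2 * Qm" by linarith
    have "2 * (\<alpha> * Qm) \<ge> \<alpha> * Q0" using q2 aE
      by (metis (mono_tags) mult.left_commute mult_left_mono of_int_le_iff of_int_mult of_int_numeral order_trans linorder_le_cases le_numeral_extra(1) mult_le_cancel_left less_eq_real_def  zero_le_divide_iff zero_le_numeral)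
    moreover have "E = 2 * (\<alpha> * Q0) + \<alpha> * Qm + Q0" unfolding E_def Q1e c2 by (simp add: algebra_simps)
    moreover have "\<alpha> * Q0 \<le> 5/3 * Q0" using aE Q0pos by (intro mult_right_mono) auto
    ultimately have "31 * (\<alpha> * Q0) \<le> 10 * E" by linarith
    then have A: "\<alpha> * Q0 / E \<le> 10/31" using Epos by (simp add: field_simps)
    have "QQ c (2*n+2) \<ge> int (2*n)" by (rule QQ_ge[OF H1])
    then have "m \<ge> 2" using hm \<open>n \<ge> 1\<close> by linarith
    then show ?thesis using A mf by simp
  qed
  show ?thesis using ii iii by blast
qed

lemma X_ge:
  fixes m :: real assumes "0 \<le> f" "f < 1" "m \<ge> 0"
  shows "m * f \<le> 2/pi * m * tan (pi/2 * f)"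
proof -
  have "pi/2 * f \<le> tan (pi/2 * f)" using assms by (intro tan_ge) auto
  then have "2/pi * m * (pi/2 * f) \<le> 2/pi * m * tan (pi/2 * f)"
    using assms by (intro mult_left_mono) auto
  then show ?thesis by simp
qed

lemma X_iii:
  fixes m :: real assumes f0: "0 \<le> f" and m2: "m \<ge> 2" and mf: "m * f \<le> 10/31"
  shows "2/pi * m * tan (pi/2 * f) < 4/pi * (2 - sqrt 3)"
proof -
  have "2 * f \<le> m * f" using m2 f0 by (intro mult_right_mono) auto
  then have f5: "f \<le> 5/31" using mf by linarith
  define x where "x = pi/2 * f"
  have pib: "pi \<le> 3.1416" using pi_approx by simp
  have x0: "0 \<le> x" unfolding x_def using f0 by simp
  have "x \<le> 3.1416/2 * (5/31)" unfolding x_def using pib f5 f0 by (intro mult_mono) auto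
  then have x1: "x \<le> 0.254" by simp
  have "x\<^sup>2 \<le> 0.254\<^sup>2" using x0 x1 by (intro power_mono) auto
  then have "x\<^sup>2 \<le> 0.064516" by (simp add: power2_eq_square)
  then have den: "1 - x\<^sup>2/2 \<ge> 0.9677" by simp
  have "tan x \<le> x / (1 - x\<^sup>2/2)" using x0 x1 by (intro tan_le) auto
  then have "2/pi * m * tan x \<le> 2/pi * m * (x / (1 - x\<^sup>2/2))"
    using m2 by (intro mult_left_mono) auto
  also have "\<dots> = (2/pi * m * x) / (1 - x\<^sup>2/2)" by simp
  also have "2/pi * m * x = m * f" unfolding x_def by simp
  also have "(m * f) / (1 - x\<^sup>2/2) \<le> (10/31) / 0.9677" using mf den m2 f0 by (intro frac_le) auto
  also have "\<dots> < 4/3.1416 * (2 - 1.7321)" by simp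
  also have "\<dots> \<le> 4/pi * (2 - sqrt 3)"
  proof -
    have "sqrt 3 \<le> 1.7321" by (rule real_le_lsqrt) (auto simp: power2_eq_square)
    moreover have "4/3.1416 \<le> 4/pi" using pib by (intro divide_left_mono) auto
    ultimately show ?thesis by (intro mult_mono) auto
  qed
  finally show ?thesis unfolding x_def .
qed

theorem lemma5p3:
  fixes c :: "nat \<Rightarrow> nat" and \<gamma> :: real and m :: nat
  assumes c0: "c 0 = 0" and c1: "c 1 = 1"
    and ceven: "\<forall>n\<ge>1. c (2*n) = 1"
    and codd: "\<forall>n\<ge>1. c (2*n+1) \<in> {1, 2}"
    and gamma: "(\<lambda>n. real_of_rat (cf c n)) \<longlonglongrightarrow> \<gamma>"
    and m: "m \<ge> 1"
  shows "((\<not> (\<exists>k. real_of_int \<lfloor>real m * \<gamma>\<rfloor> / real m = real_of_rat (cf c k)))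
            \<longrightarrow> 2/pi * real m * tan (pi/2 * (real m * \<gamma> - real_of_int \<lfloor>real m * \<gamma>\<rfloor>)) > 1)
       \<and> (\<forall>n. \<lfloor>real m * \<gamma>\<rfloor> = conv_p c (2*n) \<and> int m = conv_q c (2*n) \<and> c (2*n+1) = 1
            \<longrightarrow> 2/pi * real m * tan (pi/2 * (real m * \<gamma> - real_of_int \<lfloor>real m * \<gamma>\<rfloor>)) > 2/5)
       \<and> (\<forall>n. \<lfloor>real m * \<gamma>\<rfloor> = conv_p c (2*n) \<and> int m = conv_q c (2*n) \<and> c (2*n+1) = 2
            \<longrightarrow> 2/pi * real m * tan (pi/2 * (real m * \<gamma> - real_of_int \<lfloor>real m * \<gamma>\<rfloor>)) < 4/pi * (2 - sqrt 3))"
proof -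
  have H: "\<forall>k\<ge>1. 1 \<le> c k \<and> c k \<le> 2"
  proof (intro allI impI)
    fix k :: nat assume k: "k \<ge> 1"
    show "1 \<le> c k \<and> c k \<le> 2"
    proof (cases "even k")
      case True
      then obtain j where j: "k = 2*j" by (rule evenE)
      then have "j \<ge> 1" using k by simp
      then show ?thesis using ceven j by simp
    next
      case False
      then obtain j where j: "k = 2*j+1" by (rule oddE)
      show ?thesis
      proof (cases "j = 0")
        case True then show ?thesis using j c1 by simp
      next
        case False
        then have "j \<ge> 1" by simp
        then show ?thesis using codd j by auto
      qed
    qed
  qed
  have H1: "\<forall>k\<ge>1. c k \<ge> 1" using H by auto
  have g: "(\<lambda>n. cfr c n) \<longlonglongrightarrow> \<gamma>" using gamma by (simp add: cf_cfr)
  define f where "f = real m * \<gamma> - real_of_int \<lfloor>real m * \<gamma>\<rfloor>"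
  have f0: "0 \<le> f" "f < 1" unfolding f_def by linarith+
  have Xge: "real m * f \<le> 2/pi * real m * tan (pi/2 * f)" using f0 by (intro X_ge) auto
  have P1: "2/pi * real m * tan (pi/2 * f) > 1"
    if nc: "\<not> (\<exists>k. real_of_int \<lfloor>real m * \<gamma>\<rfloor> / real m = real_of_rat (cf c k))"
  proof -
    have "\<not> (\<exists>k. real_of_int \<lfloor>real m * \<gamma>\<rfloor> / real m = cfr c k)" using nc by (simp add: cf_cfr)
    from part_i[OF H ceven g m this] have "real m * f > 1" unfolding f_def .
    then show ?thesis using Xge by linarith
  qed
  have P2: "2/pi * real m * tan (pi/2 * f) > 2/5"
    if h: "\<lfloor>real m * \<gamma>\<rfloor> = conv_p c (2*n) \<and> int m = conv_q c (2*n) \<and> c (2*n+1) = 1" for n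
  proof -
    have "\<lfloor>real m * \<gamma>\<rfloor> = PP c (2*n+2)" "int m = QQ c (2*n+2)" using h conv_pq[OF H1, of "2*n"] by auto
    from part_23[OF H ceven g c1 this] h have "real m * f > 2/5" unfolding f_def by blast
    then show ?thesis using Xge by linarith
  qed
  have P3: "2/pi * real m * tan (pi/2 * f) < 4/pi * (2 - sqrt 3)"
    if h: "\<lfloor>real m * \<gamma>\<rfloor> = conv_p c (2*n) \<and> int m = conv_q c (2*n) \<and> c (2*n+1) = 2" for n
  proof -
    have "\<lfloor>real m * \<gamma>\<rfloor> = PP c (2*n+2)" "int m = QQ c (2*n+2)" using h conv_pq[OF H1, of "2*n"] by auto
    from part_23[OF H ceven g c1 this] h have "real m * f \<le> 10/31" "m \<ge> 2" unfolding f_def by auto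
    then show ?thesis using f0 by (intro X_iii) auto
  qed
  show ?thesis using P1 P2 P3 unfolding f_def by blast
qed

end
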